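(* Let $n,k$ be positive integers with $k^2<2n$. Then for every $\pi\in\mathfrak{S}_k\setminus\{\mathrm{id}\}$, $$|\operatorname{Wg}(\pi)|\le\frac{2}{n^kk^2}\Big(\frac{k^2}{2n}\Big)^{|\pi|}\frac{1}{1-\frac{k^2}{2n}},$$ and $$|\operatorname{Wg}(\mathrm{id})|\le\frac1{n^k}+\frac{k^2}{2n^{k+2}}\,\frac{1}{1-\frac{k^4}{4n^2}}.$$
   Context: $\mathfrak{S}_k$ is the symmetric group on $\{1,\dots,k\}$. For $\sigma\in\mathfrak{S}_k$, $|\sigma|$ is the minimal number of transpositions needed to write $\sigma$ as a product of transpositions. The Weingarten function (depending on $n$ and $k$) is $\operatorname{Wg}(\pi)=\frac1{n^k}\sum_{r\ge0}(-1)^r\frac{c_r(\pi)}{n^r}$, where $c_r(\pi)$ is the number of tuples $(s_1,\dots,s_r,t_1,\dots,t_r)$ with $1\le s_i<t_i\le k$ for all $i$, $t_1\le\cdots\le t_r$, and $\pi=(s_1\,t_1)\cdots(s_r\,t_r)$ ($(s\,t)$ the transposition). *)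

theory Defs
  imports Complex_Main "HOL-Combinatorics.Combinatorics"
begin

definition transp_prod :: "(nat \<times> nat) list \<Rightarrow> (nat \<Rightarrow> nat)" where
  "transp_prod ps = foldr (\<lambda>(s, t) f. Transposition.transpose s t \<circ> f) ps id"

definition transp_lists :: "nat \<Rightarrow> nat \<Rightarrow> (nat \<times> nat) list set" where
  "transp_lists k r = {ps. length ps = r \<and> (\<forall>(s, t) \<in> set ps. 1 \<le> s \<and> s < t \<and> t \<le> k)}"

definition perm_length :: "nat \<Rightarrow> (nat \<Rightarrow> nat) \<Rightarrow> nat" where
  "perm_length k \<sigma> = (LEAST r. \<exists>ps \<in> transp_lists k r. transp_prod ps = \<sigma>)"

definition c_count :: "nat \<Rightarrow> nat \<Rightarrow> (nat \<Rightarrow> nat) \<Rightarrow> nat" where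
  "c_count k r \<pi> = card {ps \<in> transp_lists k r. sorted (map snd ps) \<and> transp_prod ps = \<pi>}"

definition Wg :: "nat \<Rightarrow> nat \<Rightarrow> (nat \<Rightarrow> nat) \<Rightarrow> real" where
  "Wg n k \<pi> = (1 / real n ^ k) * (\<Sum>r. (-1) ^ r * real (c_count k r \<pi>) / real n ^ r)"

end

theory Submission
  imports Defs
begin

definition TA :: "nat \<Rightarrow> (nat \<times> nat) set" where
  "TA k = {(s,t). 1 \<le> s \<and> s < t \<and> t \<le> k}"

lemma TA_finite: "finite (TA k)"
  by (rule finite_subset[of _ "{0..k} \<times> {0..k}"]) (auto simp: TA_def)

lemma TA_card: "2 * card (TA k) \<le> k ^ 2"
proof -
  let ?B = "(\<lambda>(s,t). (t,s)) ` TA k"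
  have inj: "inj_on (\<lambda>(s,t). (t,s)) (TA k)" by (auto simp: inj_on_def)
  have cB: "card ?B = card (TA k)" using card_image[OF inj] .
  have disj: "TA k \<inter> ?B = {}" by (auto simp: TA_def)
  have sub: "TA k \<union> ?B \<subseteq> {1..k} \<times> {1..k}" by (auto simp: TA_def)
  have "card (TA k \<union> ?B) = card (TA k) + card ?B"
    by (rule card_Un_disjoint) (use TA_finite disj in auto)
  moreover have "card (TA k \<union> ?B) \<le> card ({1..k} \<times> {1..k})"
    by (rule card_mono[OF _ sub]) auto
  ultimately show ?thesis using cB by (simp add: card_cartesian_product power2_eq_square)
qed

lemma transp_lists_eq: "transp_lists k r = {xs. set xs \<subseteq> TA k \<and> length xs = r}"
  by (auto simp: transp_lists_def TA_def)

lemma transp_lists_card: "card (transp_lists k r) = card (TA k) ^ r"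
  and transp_lists_finite: "finite (transp_lists k r)"
  using card_lists_length_eq[OF TA_finite] finite_lists_length_eq[OF TA_finite]
  by (auto simp: transp_lists_eq)

lemma transp_prod_Nil[simp]: "transp_prod [] = id"
  by (simp add: transp_prod_def)

lemma transp_prod_Cons[simp]: "transp_prod ((s,t) # ps) = Transposition.transpose s t \<circ> transp_prod ps"
  by (simp add: transp_prod_def)

lemma transp_prod_perm: "permutation (transp_prod ps)"
  by (induction ps) (auto intro!: permutation_compose permutation_swap_id)

lemma transp_prod_even:
  "\<forall>(s,t)\<in>set ps. s \<noteq> t \<Longrightarrow> evenperm (transp_prod ps) = even (length ps)"
  by (induction ps) (auto simp: evenperm_comp transp_prod_perm permutation_swap_id evenperm_swap)

lemma transpose_inj:
  assumes "(a::nat) < b" "c < d" "Transposition.transpose a b = Transposition.transpose c d"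
  shows "a = c \<and> b = d"
proof -
  have 1: "Transposition.transpose c d a = b" using assms(3) by (metis transpose_apply_first)
  have 2: "Transposition.transpose c d b = a" using assms(3) by (metis transpose_apply_second)
  show ?thesis using 1 2 assms(1,2) by (auto simp: transpose_def split: if_splits)
qed

lemma c_count_le: "c_count k (Suc m) \<pi> \<le> card (TA k) ^ m"
proof -
  let ?S = "{ps \<in> transp_lists k (Suc m). sorted (map snd ps) \<and> transp_prod ps = \<pi>}"
  have "inj_on tl ?S"
  proof (rule inj_onI)
    fix ps qs assume ps: "ps \<in> ?S" and qs: "qs \<in> ?S" and e: "tl ps = tl qs"
    obtain s t rest where p: "ps = (s,t) # rest"
      using ps by (cases ps) (auto simp: transp_lists_def)
    obtain s' t' rest' where q: "qs = (s',t') # rest'"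
      using qs by (cases qs) (auto simp: transp_lists_def)
    have rr: "rest' = rest" using e p q by simp
    let ?R = "transp_prod rest"
    have eq: "Transposition.transpose s t \<circ> ?R = Transposition.transpose s' t' \<circ> ?R"
      using ps qs p q rr by simp
    have "surj ?R" using transp_prod_perm permutation_bijective bij_is_surj by blast
    hence ri: "?R \<circ> inv ?R = id" by (simp add: surj_iff)
    have "Transposition.transpose s t = (Transposition.transpose s t \<circ> ?R) \<circ> inv ?R"
      using ri by (simp add: comp_assoc)
    also have "\<dots> = (Transposition.transpose s' t' \<circ> ?R) \<circ> inv ?R" using eq by simp
    also have "\<dots> = Transposition.transpose s' t'" using ri by (simp add: comp_assoc)
    finally have "Transposition.transpose s t = Transposition.transpose s' t'" .
    moreover have "s < t" "s' < t'" using ps qs p q by (auto simp: transp_lists_def)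
    ultimately have "s = s' \<and> t = t'" using transpose_inj by blast
    thus "ps = qs" using p q rr by simp
  qed
  moreover have "tl ` ?S \<subseteq> transp_lists k m"
    proof
    fix x assume "x \<in> tl ` ?S"
    then obtain ps where ps: "ps \<in> ?S" and x: "x = tl ps" by blast
    have "set (tl ps) \<subseteq> set ps" by (cases ps) auto
    thus "x \<in> transp_lists k m" using ps x by (auto simp: transp_lists_def)
  qed
  ultimately have "card ?S \<le> card (transp_lists k m)"
    using card_inj_on_le transp_lists_finite by blast
  thus ?thesis by (simp add: c_count_def transp_lists_card)
qed

lemma c_count_0: "c_count k 0 \<pi> = (if \<pi> = id then 1 else 0)"
proof -
  have "{ps \<in> transp_lists k 0. sorted (map snd ps) \<and> transp_prod ps = \<pi>} = (if \<pi> = id then {[]} else {})"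
    by (auto simp: transp_lists_def)
  thus ?thesis by (simp add: c_count_def)
qed

lemma c_count_odd: "odd r \<Longrightarrow> c_count k r id = 0"
proof -
  assume o: "odd r"
  have e: "{ps \<in> transp_lists k r. sorted (map snd ps) \<and> transp_prod ps = id} = {}"
  proof (rule ccontr)
    assume "\<not> ?thesis"
    then obtain ps where "ps \<in> transp_lists k r" "transp_prod ps = id" by blast
    moreover have "\<forall>(s,t)\<in>set ps. s \<noteq> t" using calculation(1) by (auto simp: transp_lists_def)
    ultimately show False using transp_prod_even[of ps] o by (auto simp: transp_lists_def)
  qed
  show ?thesis unfolding c_count_def e by simp
qed

lemma c_count_len: "c_count k r \<pi> \<noteq> 0 \<Longrightarrow> perm_length k \<pi> \<le> r"
proof -
  assume "c_count k r \<pi> \<noteq> 0"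
  hence "{ps \<in> transp_lists k r. sorted (map snd ps) \<and> transp_prod ps = \<pi>} \<noteq> {}"
    unfolding c_count_def by (metis card.empty)
  then obtain ps where "ps \<in> transp_lists k r" "transp_prod ps = \<pi>" by blast
  thus ?thesis unfolding perm_length_def by (intro Least_le) blast
qed

lemma c_bound:
  assumes n: "n > 0" and k: "k > 0" and r: "r \<ge> 1"
  shows "real (c_count k r \<pi>) / real n ^ r \<le> (2 / real k ^ 2) * (real k ^ 2 / (2 * real n)) ^ r"
proof -
  obtain m where rm: "r = Suc m" using r by (cases r) auto
  have P: "real (card (TA k)) \<le> real k ^ 2 / 2" using TA_card[of k] by (simp add: field_simps flip: of_nat_power)
  have "real (c_count k r \<pi>) \<le> real (card (TA k)) ^ m"
    using c_count_le[of k m \<pi>] rm by (simp flip: of_nat_power)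
  also have "\<dots> \<le> (real k ^ 2 / 2) ^ m" by (rule power_mono[OF P]) simp
  finally have c: "real (c_count k r \<pi>) \<le> (real k ^ 2 / 2) ^ m" .
  have eq: "(2 / real k ^ 2) * (real k ^ 2 / (2 * real n)) ^ r = (real k ^ 2 / 2) ^ m / real n ^ r"
    using n k by (simp add: rm power_divide field_simps)
  show ?thesis unfolding eq using c n by (simp add: divide_right_mono)
qed

theorem lemma5:
  fixes n k :: nat
  assumes "n > 0" and "k > 0" and "real k ^ 2 < 2 * real n"
  shows "(\<forall>\<pi>. \<pi> permutes {1..k} \<and> \<pi> \<noteq> id \<longrightarrow>
            \<bar>Wg n k \<pi>\<bar> \<le> 2 / (real n ^ k * real k ^ 2) * (real k ^ 2 / (2 * real n)) ^ perm_length k \<pi>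
                          * (1 / (1 - real k ^ 2 / (2 * real n))))
       \<and> \<bar>Wg n k id\<bar> \<le> 1 / real n ^ k + real k ^ 2 / (2 * real n ^ (k + 2))
                          * (1 / (1 - real k ^ 4 / (4 * real n ^ 2)))"
proof -
  define x where "x = real k ^ 2 / (2 * real n)"
  define C where "C = 2 / real k ^ 2"
  define a where "a = (\<lambda>\<pi> r. (-1) ^ r * real (c_count k r \<pi>) / real n ^ r :: real)"
  have x0: "0 < x" and x1: "x < 1" using assms by (auto simp: x_def field_simps)
  have C0: "C > 0" using assms by (simp add: C_def)
  have Wg: "Wg n k \<pi> = (1 / real n ^ k) * suminf (a \<pi>)" for \<pi>
    by (simp add: Wg_def a_def)
  have na: "norm (a \<pi> r) = real (c_count k r \<pi>) / real n ^ r" for \<pi> r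
    by (simp add: a_def abs_mult)
  have gen: "\<bar>Wg n k \<pi>\<bar> \<le> (1 / real n ^ k) * B"
    if bs: "b sums B" and le: "\<And>r. norm (a \<pi> r) \<le> b r" for b B \<pi>
  proof -
    have sb: "summable b" using bs by (simp add: sums_iff)
    have sa: "summable (\<lambda>r. norm (a \<pi> r))"
      by (rule summable_comparison_test'[OF sb, of 0]) (use le in auto)
    have "norm (suminf (a \<pi>)) \<le> (\<Sum>r. norm (a \<pi> r))" by (rule summable_norm[OF sa])
    also have "\<dots> \<le> suminf b" by (rule suminf_le[OF le sa sb])
    also have "\<dots> = B" using bs by (simp add: sums_iff)
    finally have "\<bar>suminf (a \<pi>)\<bar> \<le> B" by simp
    thus ?thesis unfolding Wg using assms by (simp add: abs_mult divide_right_mono)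
  qed
  have part1: "\<bar>Wg n k \<pi>\<bar> \<le> 2 / (real n ^ k * real k ^ 2) * x ^ perm_length k \<pi> * (1 / (1 - x))"
    if "\<pi> \<noteq> id" for \<pi>
  proof -
    define L where "L = max (perm_length k \<pi>) 1"
    define b where "b = (\<lambda>r. if L \<le> r then C * x ^ r else 0)"
    have "(\<lambda>i. C * x ^ L * x ^ i) sums (C * x ^ L * (1 / (1 - x)))"
      by (rule sums_mult) (use geometric_sums[of x] x0 x1 in auto)
    moreover have "(\<lambda>i. b (i + L)) = (\<lambda>i. C * x ^ L * x ^ i)"
      by (auto simp: b_def power_add)
    ultimately have "(\<lambda>i. b (i + L)) sums (C * x ^ L * (1 / (1 - x)))" by simp
    hence "b sums (C * x ^ L * (1 / (1 - x)) + (\<Sum>i<L. b i))" by (simp add: sums_iff_shift)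
    moreover have "(\<Sum>i<L. b i) = 0" by (simp add: b_def)
    ultimately have bs: "b sums (C * x ^ L * (1 / (1 - x)))" by simp
    have le: "norm (a \<pi> r) \<le> b r" for r
    proof (cases "c_count k r \<pi> = 0")
      case True thus ?thesis using C0 x0 unfolding na by (simp add: b_def)
    next
      case False
      hence "perm_length k \<pi> \<le> r" by (rule c_count_len)
      moreover have "r \<ge> 1" using False that c_count_0[of k \<pi>] by (cases r) auto
      ultimately show ?thesis using c_bound[OF assms(1,2), of r \<pi>]
        unfolding na by (simp add: b_def L_def C_def x_def)
    qed
    have "\<bar>Wg n k \<pi>\<bar> \<le> (1 / real n ^ k) * (C * x ^ L * (1 / (1 - x)))" by (rule gen[OF bs le])
    also have "\<dots> \<le> (1 / real n ^ k) * (C * x ^ perm_length k \<pi> * (1 / (1 - x)))"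
      using x0 x1 C0 assms(1)
      by (intro mult_left_mono mult_right_mono power_decreasing) (auto simp: L_def)
    also have "\<dots> = 2 / (real n ^ k * real k ^ 2) * x ^ perm_length k \<pi> * (1 / (1 - x))"
      by (simp add: C_def)
    finally show ?thesis .
  qed
  have part2: "\<bar>Wg n k id\<bar> \<le> (1 / real n ^ k) * (1 + C * x^2 / (1 - x^2))"
  proof -
    define g where "g = (\<lambda>r. C * (x ^ r + (-x) ^ r) / 2)"
    define S where "S = C * (1 / (1 - x) + 1 / (1 - (-x))) / 2"
    have gs: "g sums S" unfolding g_def S_def
      by (intro sums_divide sums_mult sums_add geometric_sums) (use x0 x1 in auto)
    define b where "b = (\<lambda>r. if r = 0 then 1 else g r)"
    have "(\<lambda>i. g (i + 1)) sums (S - g 0)" using gs sums_iff_shift[of g 1 "S - g 0"] by simp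
    moreover have "(\<lambda>i. b (i + 1)) = (\<lambda>i. g (i + 1))" by (auto simp: b_def)
    ultimately have "(\<lambda>i. b (i + 1)) sums (S - g 0)" by simp
    hence bs: "b sums (S - g 0 + 1)" using sums_iff_shift[of b 1 "S - g 0"] by (simp add: b_def)
    have le: "norm (a id r) \<le> b r" for r
    proof (cases "r = 0")
      case True thus ?thesis unfolding na by (simp add: b_def c_count_0)
    next
      case False
      show ?thesis
      proof (cases "even r")
        case True
        thus ?thesis using False c_bound[OF assms(1,2), of r id]
          unfolding na by (simp add: b_def g_def C_def x_def)
      next
        case o: False
        have "0 \<le> g r" using o by (simp add: g_def)
        thus ?thesis using False o unfolding na by (simp add: b_def c_count_odd)
      qed
    qed
    have "S - g 0 + 1 = 1 + C * x^2 / (1 - x^2)"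
    proof -
      have xx: "x * x < 1" using x0 x1 by (metis mult_strict_mono' mult_1 less_eq_real_def)
      have "1 - x * x \<noteq> 0" "2 - x * (x * 2) \<noteq> 0" "1 - x \<noteq> 0" "1 + x \<noteq> 0" using xx x0 x1 by auto
      thus ?thesis by (simp add: S_def g_def field_simps power2_eq_square)
    qed
    thus ?thesis using gen[OF bs le] by (simp add: add.commute)
  qed
  show ?thesis
  proof (intro conjI allI impI)
    fix \<pi> assume "\<pi> permutes {1..k} \<and> \<pi> \<noteq> id"
    thus "\<bar>Wg n k \<pi>\<bar> \<le> 2 / (real n ^ k * real k ^ 2) * (real k ^ 2 / (2 * real n)) ^ perm_length k \<pi>
                          * (1 / (1 - real k ^ 2 / (2 * real n)))" using part1 by (simp add: x_def)
  next
    have e1: "real k ^ 4 / (4 * real n ^ 2) = x ^ 2" by (simp add: x_def power_divide field_simps)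
    have e2: "real k ^ 2 / (2 * real n ^ (k + 2)) = (1 / real n ^ k) * (C * x ^ 2)"
      using assms by (simp add: x_def C_def power_divide field_simps power2_eq_square)
    show "\<bar>Wg n k id\<bar> \<le> 1 / real n ^ k + real k ^ 2 / (2 * real n ^ (k + 2))
                          * (1 / (1 - real k ^ 4 / (4 * real n ^ 2)))"
      using part2 unfolding e1 e2 by (simp add: add_divide_distrib mult.commute)
  qed
qed

end
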